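(* Let $r,m\in\mathbb{N}$ with $r\ge1$, and let $G$ be a graph in which every vertex has finite $(r,m)$-rank. Then $\mathrm{adm}_r(G)\le m$.
   Context: Admissibility: for a linear order $\le$ on $V(G)$, the $r$-backconnectivity of a vertex $v$ is the maximum number of paths with at least one and at most $r$ edges that start at $v$, end at vertices $w\ge v$, and are pairwise vertex-disjoint except for their common endpoint $v$. $\mathrm{adm}_r(G)$ is the minimum over all linear orders of $V(G)$ of the maximum $r$-backconnectivity of a vertex. $N_r^G(v)$ is the closed $r$-neighborhood of $v$; $G-S$ is the subgraph induced on $V(G)\setminus S$. The $(r,m)$-rank of vertices of $G$ (values in $\mathbb{N}\cup\{\infty\}$) is defined by: initially every vertex has rank $\infty$; in rounds $i=1,2,\dots$, every vertex $v$ currently of rank $\infty$ receives rank $i$ if there exists $S\subseteq V(G)\setminus\{v\}$ with $|S|\le m$ such that every vertex of $N_r^{G-S}(v)\setminus\{v\}$ received a finite rank in rounds $1,\dots,i-1$; the procedure stops when all ranks are finite or a round assigns no new rank. *)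

theory Defs
  imports Main "HOL-Library.Extended_Nat"
begin

definition graph :: "'a set \<Rightarrow> ('a \<Rightarrow> 'a \<Rightarrow> bool) \<Rightarrow> bool" where
  "graph V E \<longleftrightarrow> finite V \<and> (\<forall>x y. E x y \<longrightarrow> x \<in> V \<and> y \<in> V \<and> x \<noteq> y \<and> E y x)"

definition walk_in :: "('a \<Rightarrow> 'a \<Rightarrow> bool) \<Rightarrow> 'a set \<Rightarrow> 'a list \<Rightarrow> bool" where
  "walk_in E X p \<longleftrightarrow> p \<noteq> [] \<and> set p \<subseteq> X \<and> (\<forall>i. Suc i < length p \<longrightarrow> E (p ! i) (p ! Suc i))"

definition nbhd :: "'a set \<Rightarrow> ('a \<Rightarrow> 'a \<Rightarrow> bool) \<Rightarrow> 'a set \<Rightarrow> nat \<Rightarrow> 'a \<Rightarrow> 'a set" where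
  "nbhd V E S r v = {u. \<exists>p. walk_in E (V - S) p \<and> hd p = v \<and> last p = u \<and> length p \<le> Suc r}"

text \<open>Paths with at least one and at most r edges from v to some w with v \<le> w (w.r.t. the order le).\<close>
definition back_paths :: "'a set \<Rightarrow> ('a \<Rightarrow> 'a \<Rightarrow> bool) \<Rightarrow> 'a rel \<Rightarrow> nat \<Rightarrow> 'a \<Rightarrow> 'a list set" where
  "back_paths V E le r v = {p. walk_in E V p \<and> distinct p \<and> 2 \<le> length p \<and> length p \<le> Suc r
                              \<and> hd p = v \<and> (v, last p) \<in> le}"

definition backconn :: "'a set \<Rightarrow> ('a \<Rightarrow> 'a \<Rightarrow> bool) \<Rightarrow> 'a rel \<Rightarrow> nat \<Rightarrow> 'a \<Rightarrow> nat" where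
  "backconn V E le r v = Max {card P | P. P \<subseteq> back_paths V E le r v \<and>
        (\<forall>p\<in>P. \<forall>q\<in>P. p \<noteq> q \<longrightarrow> set p \<inter> set q = {v})}"

text \<open>adm_r(G) = min over linear orders of V of the max r-backconnectivity
  (written as the least bound achieved by some linear order).\<close>
definition adm :: "'a set \<Rightarrow> ('a \<Rightarrow> 'a \<Rightarrow> bool) \<Rightarrow> nat \<Rightarrow> nat" where
  "adm V E r = (LEAST k. \<exists>le. linear_order_on V le \<and> (\<forall>v\<in>V. backconn V E le r v \<le> k))"

text \<open>ranked V E r m i = set of vertices that received a finite rank in rounds 1..i.\<close>
fun ranked :: "'a set \<Rightarrow> ('a \<Rightarrow> 'a \<Rightarrow> bool) \<Rightarrow> nat \<Rightarrow> nat \<Rightarrow> nat \<Rightarrow> 'a set" where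
  "ranked V E r m 0 = {}"
| "ranked V E r m (Suc i) = ranked V E r m i \<union>
     {v \<in> V. \<exists>S. S \<subseteq> V - {v} \<and> card S \<le> m \<and> nbhd V E S r v - {v} \<subseteq> ranked V E r m i}"

definition rank :: "'a set \<Rightarrow> ('a \<Rightarrow> 'a \<Rightarrow> bool) \<Rightarrow> nat \<Rightarrow> nat \<Rightarrow> 'a \<Rightarrow> enat" where
  "rank V E r m v = (if \<exists>i. v \<in> ranked V E r m i
                      then enat (LEAST i. v \<in> ranked V E r m i) else \<infinity>)"

end

theory Submission
  imports Defs
begin

lemma ranked_least_le:
  assumes "u \<in> ranked V E r m j"
  shows "(LEAST i. u \<in> ranked V E r m i) \<le> j"
  using assms by (rule Least_le)

lemma backconn_le:
  fixes f :: "'a \<Rightarrow> nat"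
  assumes g: "graph V E" and vV: "v \<in> V"
    and ex: "\<exists>i. v \<in> ranked V E r m i"
    and fdef: "\<And>x. f x = (LEAST i. x \<in> ranked V E r m i)"
    and mono: "\<And>w. (v, w) \<in> le \<Longrightarrow> f v \<le> f w"
  shows "backconn V E le r v \<le> m"
proof -
  have finV: "finite V" using g unfolding graph_def by auto
  define i where "i = f v"
  have vi: "v \<in> ranked V E r m i" using ex fdef i_def by (metis LeastI_ex)
  have i0: "i \<noteq> 0" using vi by (cases i) auto
  then obtain j where ij: "i = Suc j" by (cases i) auto
  have vj: "v \<notin> ranked V E r m j"
  proof
    assume "v \<in> ranked V E r m j"
    then have "f v \<le> j" using fdef Least_le by metis
    then show False using ij i_def by simp
  qed
  from vi vj ij obtain S where S: "S \<subseteq> V - {v}" "card S \<le> m"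
    "nbhd V E S r v - {v} \<subseteq> ranked V E r m j" by auto
  have finS: "finite S" using S(1) finV finite_subset by blast
  have key: "set p \<inter> S \<noteq> {}" if p: "p \<in> back_paths V E le r v" for p
  proof
    assume dis: "set p \<inter> S = {}"
    from p have w: "walk_in E V p" "distinct p" "2 \<le> length p" "length p \<le> Suc r"
      "hd p = v" "(v, last p) \<in> le" unfolding back_paths_def by auto
    have "walk_in E (V - S) p" using w(1) dis unfolding walk_in_def by auto
    then have ln: "last p \<in> nbhd V E S r v" unfolding nbhd_def using w by auto
    have "last p \<noteq> v"
    proof
      assume "last p = v"
      then have "hd p = last p" using w by simp
      moreover obtain a b xs where "p = a # xs @ [b]" using w(3)
        by (metis One_nat_def Suc_1 Suc_le_length_iff length_Cons list.size(3) not_less_eq_eq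
            rev_exhaust zero_le)
      ultimately show False using w(2) by auto
    qed
    with ln S(3) have "last p \<in> ranked V E r m j" by auto
    then have "f (last p) \<le> j" using fdef Least_le by metis
    moreover have "f v \<le> f (last p)" using mono w(6) by blast
    ultimately show False using ij i_def by simp
  qed
  have bnd: "card P \<le> m" if P: "P \<subseteq> back_paths V E le r v"
    "\<forall>p\<in>P. \<forall>q\<in>P. p \<noteq> q \<longrightarrow> set p \<inter> set q = {v}" for P
  proof -
    define h where "h p = (SOME s. s \<in> set p \<inter> S)" for p
    have hp: "h p \<in> set p \<inter> S" if "p \<in> P" for p
      using key[of p] that P(1) unfolding h_def by (metis (no_types) ex_in_conv someI_ex subsetD)
    have "inj_on h P"
    proof
      fix p q assume pq: "p \<in> P" "q \<in> P" "h p = h q"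
      show "p = q"
      proof (rule ccontr)
        assume "p \<noteq> q"
        then have "set p \<inter> set q = {v}" using P(2) pq by blast
        moreover have "h p \<in> set p \<inter> set q" using hp[OF pq(1)] hp[OF pq(2)] pq(3) by auto
        moreover have "h p \<in> S" using hp pq by auto
        ultimately show False using S(1) by auto
      qed
    qed
    moreover have "h ` P \<subseteq> S" using hp by auto
    ultimately have "card P \<le> card S" using finS card_inj_on_le by blast
    then show ?thesis using S(2) by simp
  qed
  let ?A = "{card P | P. P \<subseteq> back_paths V E le r v \<and>
        (\<forall>p\<in>P. \<forall>q\<in>P. p \<noteq> q \<longrightarrow> set p \<inter> set q = {v})}"
  have "?A \<subseteq> {..m}" using bnd by auto
  then have fin: "finite ?A" using finite_subset by blast
  have ne: "?A \<noteq> {}" by auto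
  have "Max ?A \<le> m" using fin ne bnd by (subst Max_le_iff) auto
  then show ?thesis unfolding backconn_def .
qed

theorem lemma3p7:
  fixes V :: "'a set" and E :: "'a \<Rightarrow> 'a \<Rightarrow> bool" and r m :: nat
  assumes "graph V E" and "r \<ge> 1"
    and "\<forall>v\<in>V. rank V E r m v \<noteq> \<infinity>"
  shows "adm V E r \<le> m"
proof -
  have finV: "finite V" using assms(1) unfolding graph_def by auto
  define f where "f x = (LEAST i. x \<in> ranked V E r m i)" for x
  have ex: "\<exists>i. v \<in> ranked V E r m i" if "v \<in> V" for v
    using assms(3) that unfolding rank_def by (auto split: if_splits)
  obtain b where b: "bij_betw b {0..<card V} V" using ex_bij_betw_nat_finite finV by blast
  define g where "g = inv_into {0..<card V} b"
  have gb: "bij_betw g V {0..<card V}" unfolding g_def using b by (rule bij_betw_inv_into)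
  define N where "N = card V"
  define k where "k x = f x * N + g x" for x
  have gN: "g x < N" if "x \<in> V" for x using gb that unfolding N_def bij_betw_def by auto
  have ginj: "inj_on g V" using gb bij_betw_def by blast
  have kinj: "x = y" if "x \<in> V" "y \<in> V" "k x = k y" for x y
  proof -
    have "f x = f y \<and> g x = g y"
    proof -
      have "k x div N = f x" "k x mod N = g x" using gN[OF that(1)] unfolding k_def by auto
      moreover have "k y div N = f y" "k y mod N = g y" using gN[OF that(2)] unfolding k_def by auto
      ultimately show ?thesis using that(3) by metis
    qed
    then show ?thesis using ginj that by (meson inj_on_def)
  qed
  have kf: "f x \<le> f y" if "x \<in> V" "y \<in> V" "k x \<le> k y" for x y
  proof (rule ccontr)
    assume "\<not> f x \<le> f y"
    then have "f y + 1 \<le> f x" by simp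
    then have "(f y + 1) * N \<le> f x * N" by (rule mult_right_mono) simp
    then have "k y < k x" using gN[OF that(2)] unfolding k_def by (simp add: algebra_simps)
    then show False using that(3) by simp
  qed
  define le where "le = {(x, y). x \<in> V \<and> y \<in> V \<and> k x \<le> k y}"
  have lin: "linear_order_on V le"
    unfolding linear_order_on_def partial_order_on_def preorder_on_def refl_on_def trans_def
      antisym_def total_on_def le_def
    using kinj by auto
  have bc: "\<forall>v\<in>V. backconn V E le r v \<le> m"
  proof
    fix v assume vV: "v \<in> V"
    show "backconn V E le r v \<le> m"
      by (rule backconn_le[OF assms(1) vV ex[OF vV] f_def]) (use kf in \<open>auto simp: le_def\<close>)
  qed
  show ?thesis unfolding adm_def
    by (rule Least_le) (use lin bc in blast)
qed

end
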